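(* Let $d\ge 2$ be an integer and let $r$ be the integer closest to $d/3$. For every integer $k\ge 2$, the seed $Q(d)=\#^{d-r}-\#^{r}$ is $k$-optimal in $\mathcal C_1(d)$, i.e. its $k$-critical length is minimal among all seeds $\#^{p}-\#^{q}$ with $p,q\ge 1$, $p+q=d$.
   Context: A seed is a finite word over $\{\#,-\}$ that begins and ends with $\#$; $-$ is called a joker; the weight is the number of $\#$'s. A binary word is an $(m,k)$-similarity if it has length $m$ and exactly $k$ zeros. A seed $Q$ of length $s$ matches a binary word $w$ at position $i$ ($1\le i\le |w|-s+1$) if $w[i+t-1]=1$ for every $t$ with $Q[t]=\#$; $Q$ detects $w$ if it matches at some position; $Q$ solves the $(m,k)$-problem if it detects every $(m,k)$-similarity. The $k$-critical length of $Q$ is the minimal $m$ such that $Q$ solves the $(m,k)$-problem. $\mathcal C_1(d)$ is the class of seeds of weight $d$ with exactly one joker. A seed is $k$-optimal in $\mathcal C_1(d)$ if it has minimal $k$-critical length among all seeds of $\mathcal C_1(d)$. *)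

theory Defs
  imports Complex_Main
begin

text \<open>In a seed, True stands for # and False for the joker -.
  In a binary word, True stands for 1 and False for 0.
  Positions are 0-based here (position i here = position i+1 in the paper).\<close>

definition is_seed :: "bool list \<Rightarrow> bool" where
  "is_seed Q \<longleftrightarrow> Q \<noteq> [] \<and> hd Q \<and> last Q"

definition weight :: "bool list \<Rightarrow> nat" where
  "weight Q = length (filter id Q)"

definition jokers :: "bool list \<Rightarrow> nat" where
  "jokers Q = length (filter Not Q)"

definition similarity :: "nat \<Rightarrow> nat \<Rightarrow> bool list \<Rightarrow> bool" where
  "similarity m k w \<longleftrightarrow> length w = m \<and> length (filter Not w) = k"

definition matches_at :: "bool list \<Rightarrow> bool list \<Rightarrow> nat \<Rightarrow> bool" where
  "matches_at Q w i \<longleftrightarrow> i + length Q \<le> length w \<and>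
     (\<forall>t < length Q. Q ! t \<longrightarrow> w ! (i + t))"

definition detects :: "bool list \<Rightarrow> bool list \<Rightarrow> bool" where
  "detects Q w \<longleftrightarrow> (\<exists>i. matches_at Q w i)"

definition solves :: "bool list \<Rightarrow> nat \<Rightarrow> nat \<Rightarrow> bool" where
  "solves Q m k \<longleftrightarrow> (\<forall>w. similarity m k w \<longrightarrow> detects Q w)"

text \<open>k-critical length: the threshold length from which on Q solves the (m,k)-problem.
  (For m < k there are no (m,k)-similarities, so the problem is vacuous.)\<close>
definition critical_length :: "bool list \<Rightarrow> nat \<Rightarrow> nat" where
  "critical_length Q k = (LEAST m. \<forall>m'\<ge>m. solves Q m' k)"

definition C1 :: "nat \<Rightarrow> bool list set" where
  "C1 d = {Q. is_seed Q \<and> weight Q = d \<and> jokers Q = 1}"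

definition k_optimal :: "nat \<Rightarrow> nat \<Rightarrow> bool list \<Rightarrow> bool" where
  "k_optimal k d Q \<longleftrightarrow> Q \<in> C1 d \<and> (\<forall>Q' \<in> C1 d. critical_length Q k \<le> critical_length Q' k)"

definition Qseed :: "nat \<Rightarrow> bool list" where
  "Qseed d = (let r = nat (round (real d / 3)) in
     replicate (d - r) True @ [False] @ replicate r True)"

end

theory Submission imports Defs begin

fun rw :: "nat list \<Rightarrow> bool list" where
  "rw [] = []"
| "rw [a] = replicate a True"
| "rw (a # b # as) = replicate a True @ False # rw (b # as)"

fun ok :: "nat \<Rightarrow> nat \<Rightarrow> nat list \<Rightarrow> bool" where
  "ok p q [] = True"
| "ok p q [a] = (a \<le> p + q)"
| "ok p q (a # b # as) = (a \<le> p + q \<and> \<not> (p \<le> a \<and> q \<le> b) \<and> ok p q (b # as))"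

definition sd :: "nat \<Rightarrow> nat \<Rightarrow> bool list" where
  "sd p q = replicate p True @ False # replicate q True"

lemma rw_Suc: "rw (Suc a # as) = True # rw (a # as)"
  by (cases as) auto

lemma rw_exists: "\<exists>as. rw as = w \<and> length as = length (filter Not w) + 1"
proof (induction w)
  case Nil
  then show ?case by (intro exI[of _ "[0]"]) auto
next
  case (Cons x w)
  then obtain as where h: "rw as = w" "length as = length (filter Not w) + 1" by blast
  then obtain a as' where as: "as = a # as'" by (cases as) auto
  show ?case
  proof (cases x)
    case True
    then show ?thesis using h as by (intro exI[of _ "Suc a # as'"]) (simp add: rw_Suc)
  next
    case False
    then show ?thesis using h as by (intro exI[of _ "0 # as"]) simp
  qed
qed

lemma len_rw: "as \<noteq> [] \<Longrightarrow> length (rw as) = sum_list as + length as - 1"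
  by (induction as rule: rw.induct) auto

lemma zeros_rw: "length (filter Not (rw as)) = length as - 1"
  by (induction as rule: rw.induct) auto

lemma rw_pre: "j < b \<Longrightarrow> rw (b # as) ! j"
  by (cases as) (auto simp: nth_append)

lemma rw_len_ge: "b \<le> length (rw (b # as))"
  by (cases as) auto

lemma len_sd: "length (sd p q) = p + q + 1" by (simp add: sd_def)

lemma nth_sd: "t < p + q + 1 \<Longrightarrow> sd p q ! t = (t \<noteq> p)"
  by (auto simp: sd_def nth_append nth_Cons split: nat.splits)

lemma matches_shift: "matches_at Q w i \<Longrightarrow> matches_at Q (u @ w) (length u + i)"
  by (auto simp: matches_at_def nth_append)

lemma matches_pre: "matches_at Q u i \<Longrightarrow> matches_at Q (u @ v) i"
  by (auto simp: matches_at_def nth_append)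

lemma matches_unshift: "matches_at Q (u @ w) i \<Longrightarrow> length u \<le> i \<Longrightarrow> matches_at Q w (i - length u)"
  unfolding matches_at_def
proof (intro conjI allI impI)
  assume h: "i + length Q \<le> length (u @ w) \<and> (\<forall>t<length Q. Q ! t \<longrightarrow> (u @ w) ! (i + t))" "length u \<le> i"
  then show "i - length u + length Q \<le> length w" by auto
  fix t assume "t < length Q" "Q ! t"
  then have "(u @ w) ! (i + t)" using h by blast
  then show "w ! (i - length u + t)" using h(2) by (simp add: nth_append)
qed

lemma det_pair:
  assumes "p \<le> a" "q \<le> b"
  shows "detects (sd p q) (rw (a # b # as))"
proof -
  have "matches_at (sd p q) (rw (a # b # as)) (a - p)"
    unfolding matches_at_def len_sd
  proof (intro conjI allI impI)
    show "a - p + (p + q + 1) \<le> length (rw (a # b # as))"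
      using rw_len_ge[of b as] assms by simp
    fix t assume t: "t < p + q + 1" "sd p q ! t"
    then have tp: "t \<noteq> p" using nth_sd by auto
    show "rw (a # b # as) ! (a - p + t)"
    proof (cases "t < p")
      case True
      then show ?thesis using assms by (simp add: nth_append)
    next
      case False
      then have "a - p + t = a + 1 + (t - p - 1)" "t - p - 1 < b" using tp t assms by auto
      then show ?thesis using rw_pre[of "t - p - 1" b as] by (simp add: nth_append)
    qed
  qed
  then show ?thesis unfolding detects_def by blast
qed

lemma det_big:
  assumes "p + q < a"
  shows "detects (sd p q) (rw (a # as))"
proof -
  have "matches_at (sd p q) (rw (a # as)) 0"
    unfolding matches_at_def len_sd
    using rw_len_ge[of a as] rw_pre[of _ a as] assms by auto
  then show ?thesis unfolding detects_def by blast
qed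

lemma det_shift: "detects Q w \<Longrightarrow> detects Q (u @ w)"
  unfolding detects_def using matches_shift by blast

lemma not_ok_det: "\<not> ok p q as \<Longrightarrow> detects (sd p q) (rw as)"
proof (induction as rule: rw.induct)
  case 1 then show ?case by simp
next
  case (2 a)
  then show ?case using det_big[of p q a "[]"] by simp
next
  case (3 a b as)
  show ?case
  proof (cases "a \<le> p + q")
    case False then show ?thesis using det_big[of p q a "b # as"] by simp
  next
    case True
    show ?thesis
    proof (cases "p \<le> a \<and> q \<le> b")
      case True then show ?thesis using det_pair by blast
    next
      case False
      then have "detects (sd p q) (rw (b # as))" using 3 True by simp
      then show ?thesis using det_shift[of _ _ "replicate a True @ [False]"] by simp
    qed
  qed
qed

lemma ok_not_det: "ok p q as \<Longrightarrow> \<not> detects (sd p q) (rw as)"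
proof (induction as rule: rw.induct)
  case 1 then show ?case by (simp add: detects_def matches_at_def len_sd)
next
  case (2 a)
  then show ?case by (simp add: detects_def matches_at_def len_sd)
next
  case (3 a b as)
  have ok: "a \<le> p + q" "\<not> (p \<le> a \<and> q \<le> b)" "ok p q (b # as)" using 3 by auto
  show ?case
  proof
    assume "detects (sd p q) (rw (a # b # as))"
    then obtain i where m: "matches_at (sd p q) (rw (a # b # as)) i" unfolding detects_def by blast
    have rwe: "rw (a # b # as) = (replicate a True @ [False]) @ rw (b # as)" by simp
    show False
    proof (cases "a + 1 \<le> i")
      case True
      then have "matches_at (sd p q) (rw (b # as)) (i - (a + 1))"
        using matches_unshift[of "sd p q" "replicate a True @ [False]" "rw (b # as)" i] m rwe by simp
      then show False using 3 ok(3) unfolding detects_def by blast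
    next
      case False
      then have ia: "i \<le> a" by simp
      have len: "i + (p + q + 1) \<le> a + 1 + length (rw (b # as))"
        and mm: "\<And>t. t < p + q + 1 \<Longrightarrow> sd p q ! t \<Longrightarrow> rw (a # b # as) ! (i + t)"
        using m unfolding matches_at_def len_sd by auto
      have wa: "\<not> rw (a # b # as) ! a" by (simp add: nth_append)
      have api: "a - i = p"
      proof (rule ccontr)
        assume ne: "a - i \<noteq> p"
        show False
        proof (cases "a - i < p + q + 1")
          case True
          then have "rw (a # b # as) ! (i + (a - i))" using mm[of "a - i"] nth_sd ne by auto
          then show False using wa ia by simp
        next
          case False then show False using ok(1) by simp
        qed
      qed
      have "q \<le> b"
      proof (rule ccontr)
        assume bq: "\<not> q \<le> b"
        show False
        proof (cases as)
          case Nil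
          then show False using len api ia bq by simp
        next
          case (Cons c cs)
          have "rw (a # b # as) ! (i + (p + 1 + b))" using mm[of "p + 1 + b"] nth_sd bq by auto
          moreover have "i + (p + 1 + b) = (a + 1) + b" using api ia by simp
          moreover have "rw (a # b # as) ! ((a + 1) + b) = False" using Cons by (simp add: nth_append)
          ultimately show False by metis
        qed
      qed
      then show False using ok(2) api ia by simp
    qed
  qed
qed


lemma matches_rev: "matches_at Q w i \<Longrightarrow> matches_at (rev Q) (rev w) (length w - length Q - i)"
  unfolding matches_at_def
proof (intro conjI allI impI)
  assume h: "i + length Q \<le> length w \<and> (\<forall>t<length Q. Q ! t \<longrightarrow> w ! (i + t))"
  then show "length w - length Q - i + length (rev Q) \<le> length (rev w)" by simp
  fix t assume t: "t < length (rev Q)" "rev Q ! t"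
  then have "Q ! (length Q - Suc t)" by (simp add: rev_nth)
  moreover have "length Q - Suc t < length Q" using t by simp
  ultimately have "w ! (i + (length Q - Suc t))" using h by blast
  moreover have "length w - length Q - i + t < length w" using h t by auto
  moreover have "length w - Suc (length w - length Q - i + t) = i + (length Q - Suc t)"
    using h t by auto
  ultimately show "rev w ! (length w - length Q - i + t)" by (metis length_rev rev_nth)
qed

lemma detects_rev: "detects (rev Q) (rev w) \<longleftrightarrow> detects Q w"
  unfolding detects_def using matches_rev[of Q w] matches_rev[of "rev Q" "rev w"] by auto

lemma solves_rev: "solves (rev Q) m k \<longleftrightarrow> solves Q m k"
  unfolding solves_def
proof
  assume h: "\<forall>w. similarity m k w \<longrightarrow> detects (rev Q) w"
  show "\<forall>w. similarity m k w \<longrightarrow> detects Q w"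
  proof (intro allI impI)
    fix w assume "similarity m k w"
    then have "similarity m k (rev w)" by (simp add: similarity_def rev_filter[symmetric])
    then show "detects Q w" using h detects_rev by blast
  qed
next
  assume h: "\<forall>w. similarity m k w \<longrightarrow> detects Q w"
  show "\<forall>w. similarity m k w \<longrightarrow> detects (rev Q) w"
  proof (intro allI impI)
    fix w assume "similarity m k w"
    then have "similarity m k (rev w)" by (simp add: similarity_def rev_filter[symmetric])
    then show "detects (rev Q) w" using h detects_rev[of Q "rev w"] by simp
  qed
qed

lemma crit_rev: "critical_length (rev Q) k = critical_length Q k"
  unfolding critical_length_def solves_rev ..

lemma rev_sd: "rev (sd p q) = sd q p" by (simp add: sd_def)

lemma C1_form:
  assumes "Q \<in> C1 d"
  shows "\<exists>p q. Q = sd p q \<and> 1 \<le> p \<and> 1 \<le> q \<and> p + q = d"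
proof -
  have s: "is_seed Q" and w: "weight Q = d" and j: "jokers Q = 1" using assms by (auto simp: C1_def)
  have "False \<in> set Q" using j unfolding jokers_def by (metis filter_False length_0_conv zero_neq_one)
  then obtain xs ys where Q: "Q = xs @ False # ys" and nx: "False \<notin> set xs"
    using split_list_first by metis
  have "length (filter Not ys) = 0" using j Q unfolding jokers_def by simp
  then have ny: "False \<notin> set ys" by (metis filter_empty_conv length_0_conv)
  have xs: "xs = replicate (length xs) True"
    using nx by (metis (full_types) replicate_length_same)
  have ys: "ys = replicate (length ys) True"
    using ny by (metis (full_types) replicate_length_same)
  have Qe: "Q = sd (length xs) (length ys)" unfolding sd_def using Q xs ys by metis
  have "length xs \<noteq> 0" using s Qe unfolding is_seed_def sd_def by auto
  then have h1: "1 \<le> length xs" by linarith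
  have "length ys \<noteq> 0" using s Qe unfolding is_seed_def sd_def by auto
  then have h2: "1 \<le> length ys" by linarith
  have h3: "length xs + length ys = d" using w Qe unfolding weight_def sd_def by simp
  show ?thesis using Qe h1 h2 h3 by blast
qed

lemma sd_C1: "1 \<le> p \<Longrightarrow> 1 \<le> q \<Longrightarrow> sd p q \<in> C1 (p + q)"
  unfolding C1_def is_seed_def weight_def jokers_def sd_def
  by (cases p; cases q; simp)

lemma len_ne: "length as = k + 1 \<Longrightarrow> as \<noteq> []" by auto

lemma ok_sum: "ok p q as \<Longrightarrow> sum_list as \<le> length as * (p + q)"
  by (induction as rule: rw.induct) auto

lemma ok_tl: "ok p q (a # as) \<Longrightarrow> ok p q as"
  by (cases as) auto

lemma crit_upper:
  assumes "\<And>as. ok p q as \<Longrightarrow> length as = k + 1 \<Longrightarrow> sum_list as \<le> B"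
  shows "critical_length (sd p q) k \<le> k + B + 1"
  unfolding critical_length_def
proof (rule Least_le, intro allI impI)
  fix m assume m: "k + B + 1 \<le> m"
  show "solves (sd p q) m k" unfolding solves_def
  proof (intro allI impI)
    fix w assume sim: "similarity m k w"
    obtain as where as: "rw as = w" "length as = length (filter Not w) + 1" using rw_exists by blast
    show "detects (sd p q) w"
    proof (rule ccontr)
      assume "\<not> detects (sd p q) w"
      then have "ok p q as" using not_ok_det as by blast
      moreover have "length as = k + 1" using as sim by (simp add: similarity_def)
      ultimately have "sum_list as \<le> B" using assms by blast
      moreover have "length w = sum_list as + k" using len_rw[of as] as sim \<open>length as = k + 1\<close> \<open>length as = k + 1\<close> len_ne[of as]
        by (simp add: similarity_def)
      ultimately show False using sim m by (simp add: similarity_def)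
    qed
  qed
qed

lemma crit_lower:
  assumes "ok p q as" "length as = k + 1"
  shows "k + sum_list as < critical_length (sd p q) k"
proof -
  let ?P = "\<lambda>m. \<forall>m'\<ge>m. solves (sd p q) m' k"
  have ex: "?P (k + (k + 1) * (p + q) + 1)"
    using crit_upper[of p q k "(k + 1) * (p + q)"] ok_sum
    unfolding critical_length_def
  proof -
    have "\<And>as. ok p q as \<Longrightarrow> length as = k + 1 \<Longrightarrow> sum_list as \<le> (k + 1) * (p + q)"
      using ok_sum by fastforce
    show ?thesis
    proof (intro allI impI)
      fix m assume m: "k + (k + 1) * (p + q) + 1 \<le> m"
      show "solves (sd p q) m k" unfolding solves_def
      proof (intro allI impI)
        fix w assume sim: "similarity m k w"
        obtain bs where bs: "rw bs = w" "length bs = length (filter Not w) + 1" using rw_exists by blast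
        show "detects (sd p q) w"
        proof (rule ccontr)
          assume "\<not> detects (sd p q) w"
          then have "ok p q bs" using not_ok_det bs by blast
          moreover have "length bs = k + 1" using bs sim by (simp add: similarity_def)
          ultimately have "sum_list bs \<le> (k + 1) * (p + q)" using ok_sum by fastforce
          moreover have "length w = sum_list bs + k" using len_rw[of bs] bs sim \<open>length bs = k + 1\<close> \<open>length bs = k + 1\<close> len_ne[of bs]
            by (simp add: similarity_def)
          ultimately show False using sim m by (simp add: similarity_def)
        qed
      qed
    qed
  qed
  then have c: "?P (critical_length (sd p q) k)" unfolding critical_length_def by (rule LeastI)
  have ns: "\<not> solves (sd p q) (k + sum_list as) k"
  proof -
    have "similarity (k + sum_list as) k (rw as)"
      using assms len_rw[of as] zeros_rw[of as] len_ne[of as k] by (auto simp: similarity_def)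
    moreover have "\<not> detects (sd p q) (rw as)" using ok_not_det assms by blast
    ultimately show ?thesis unfolding solves_def by blast
  qed
  show ?thesis
  proof (rule ccontr)
    assume "\<not> ?thesis"
    then show False using c ns by auto
  qed
qed


definition X :: "nat \<Rightarrow> nat \<Rightarrow> nat" where "X P R = P + 2 * R - 1"

definition G :: "nat \<Rightarrow> nat \<Rightarrow> nat \<Rightarrow> nat" where
  "G P R m = P + R + (m div 2) * X P R + (m mod 2) * (P - 1)"

lemma G2: "G P R (Suc (Suc m)) = G P R m + X P R"
  unfolding G_def by simp

lemma G1:
  assumes "P \<le> 2 * R + 1" "1 \<le> R"
  shows "(P - 1) + G P R m \<le> G P R (Suc m)"
proof (cases "even m")
  case True
  then obtain j where "m = 2 * j" by blast
  then show ?thesis unfolding G_def by simp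
next
  case False
  then obtain j where m: "m = 2 * j + 1" using oddE by blast
  have "Suc m div 2 = j + 1" "m div 2 = j" "Suc m mod 2 = 0" "m mod 2 = 1" using m by auto
  moreover have "(P - 1) + (P - 1) \<le> X P R" using assms unfolding X_def by simp
  moreover have "(j + 1) * X P R = j * X P R + X P R" by simp
  ultimately show ?thesis unfolding G_def by simp
qed

lemma ub:
  assumes "R \<le> P" "P \<le> 2 * R + 1" "1 \<le> R"
  shows "ok P R as \<Longrightarrow> as \<noteq> [] \<Longrightarrow> sum_list as \<le> G P R (length as - 1)"
proof (induction "length as" arbitrary: as rule: less_induct)
  case less
  show ?case
  proof (cases as)
    case Nil then show ?thesis using less by simp
  next
    case (Cons a bs)
    show ?thesis
    proof (cases bs)
      case Nil
      then show ?thesis using less Cons by (simp add: G_def)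
    next
      case (Cons b rest)
      have as: "as = a # b # rest" using Cons \<open>as = a # bs\<close> by simp
      have okr: "ok P R (b # rest)" and a1: "a \<le> P + R" and ab: "\<not> (P \<le> a \<and> R \<le> b)"
        using less.prems as by auto
      show ?thesis
      proof (cases "a < P")
        case True
        have "sum_list (b # rest) \<le> G P R (length rest)"
          using less.hyps[of "b # rest"] okr as by simp
        then have "sum_list as \<le> (P - 1) + G P R (length rest)" using True as by simp
        also have "\<dots> \<le> G P R (Suc (length rest))" using G1[of P R "length rest"] assms by simp
        finally show ?thesis using as by simp
      next
        case False
        then have b: "b \<le> R - 1" using ab by simp
        show ?thesis
        proof (cases rest)
          case Nil
          then show ?thesis using as a1 b assms by (simp add: G_def)
        next
          case (Cons c cs)
          have "ok P R rest" using okr ok_tl by blast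
          then have "sum_list rest \<le> G P R (length rest - 1)"
            using less.hyps[of rest] as Cons by simp
          then have "sum_list as \<le> X P R + G P R (length rest - 1)"
            using a1 b as assms unfolding X_def by simp
          also have "\<dots> = G P R (Suc (Suc (length rest - 1)))" using G2 by simp
          finally show ?thesis using as Cons by simp
        qed
      qed
    qed
  qed
qed

fun pairs :: "nat \<Rightarrow> nat \<Rightarrow> nat \<Rightarrow> nat list" where
  "pairs p q 0 = [p + q]"
| "pairs p q (Suc j) = (p + q) # (q - 1) # pairs p q j"

lemma pairs_hd: "\<exists>l. pairs p q j = (p + q) # l"
  by (cases j) auto

lemma ok_pairs:
  assumes "q \<le> p" "1 \<le> q"
  shows "ok p q (pairs p q j)"
proof (induction j)
  case 0 then show ?case by simp
next
  case (Suc j)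
  obtain l where l: "pairs p q j = (p + q) # l" using pairs_hd by blast
  show ?case using Suc assms l by auto
qed

lemma ok_pairs1:
  assumes "q \<le> p" "1 \<le> q"
  shows "ok p q ((p - 1) # pairs p q j)"
proof -
  obtain l where l: "pairs p q j = (p + q) # l" using pairs_hd by blast
  show ?thesis using ok_pairs[OF assms, of j] l assms by auto
qed

lemma len_pairs: "length (pairs p q j) = 2 * j + 1" by (induction j) auto

lemma sum_pairs: "1 \<le> q \<Longrightarrow> sum_list (pairs p q j) = p + q + j * X p q"
  by (induction j) (auto simp: X_def)

definition mids :: "nat \<Rightarrow> nat \<Rightarrow> nat \<Rightarrow> nat list" where
  "mids p q j = replicate j (p - 1) @ [p + q]"

lemma ok_mids:
  assumes "1 \<le> p"
  shows "ok p q (mids p q j)"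
proof (induction j)
  case 0 then show ?case by (simp add: mids_def)
next
  case (Suc j)
  then show ?case using assms by (cases j) (auto simp: mids_def)
qed

lemma len_mids: "length (mids p q j) = j + 1" by (simp add: mids_def)
lemma sum_mids: "sum_list (mids p q j) = j * (p - 1) + p + q" by (simp add: mids_def sum_list_replicate)

lemma lower_pq:
  assumes "q \<le> p" "1 \<le> q"
  shows "k + max (k * (p - 1) + p + q) (p + q + (k div 2) * X p q + (k mod 2) * (p - 1))
         < critical_length (sd p q) k"
proof -
  have 1: "k + (k * (p - 1) + p + q) < critical_length (sd p q) k"
    using crit_lower[of p q "mids p q k" k] ok_mids[of p q k] assms len_mids sum_mids by simp
  have 2: "k + (p + q + (k div 2) * X p q + (k mod 2) * (p - 1)) < critical_length (sd p q) k"
  proof (cases "even k")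
    case True
    then obtain j where k: "k = 2 * j" by blast
    show ?thesis using crit_lower[of p q "pairs p q j" k] ok_pairs[OF assms, of j]
        len_pairs[of p q j] sum_pairs[of q p j] assms k by simp
  next
    case False
    then obtain j where k: "k = 2 * j + 1" using oddE by blast
    have "k div 2 = j" "k mod 2 = 1" using k by auto
    then show ?thesis using crit_lower[of p q "(p - 1) # pairs p q j" k] ok_pairs1[OF assms, of j]
        len_pairs[of p q j] sum_pairs[of q p j] assms k by simp
  qed
  show ?thesis using 1 2 by simp
qed

lemma arith:
  assumes "R \<le> P" "P \<le> 2 * R + 1" "2 * R \<le> P + 1" "1 \<le> R"
    and "p + q = P + R" "q \<le> p" "1 \<le> q" "1 \<le> K" "e \<le> 1"
  shows "G P R (2 * K + e) \<le> max ((2 * K + e) * (p - 1) + p + q) (p + q + K * X p q + e * (p - 1))"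
proof -
  have dm: "(2 * K + e) div 2 = K" "(2 * K + e) mod 2 = e" using assms(9) by auto
  show ?thesis
  proof (cases "R \<le> q")
    case True
    have x: "X p q = X P R + (q - R)" using True assms unfolding X_def by simp
    have y: "P - 1 = (p - 1) + (q - R)" using True assms by simp
    have z: "e * (q - R) \<le> K * (q - R)" using assms by (intro mult_right_mono) auto
    moreover have "K * X p q = K * X P R + K * (q - R)" unfolding x
      by (simp add: distrib_left)
    moreover have "e * (P - 1) = e * (p - 1) + e * (q - R)" unfolding y by (simp add: distrib_left)
    ultimately have "G P R (2 * K + e) \<le> p + q + K * X p q + e * (p - 1)"
      unfolding G_def dm using assms by linarith
    then show ?thesis by linarith
  next
    case False
    then have pP: "P \<le> p - 1" using assms by simp
    have "(2 * K + e) * P \<le> (2 * K + e) * (p - 1)" using pP by simp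
    moreover have "K * X P R \<le> K * (2 * P)" using assms unfolding X_def by simp
    moreover have "e * (P - 1) \<le> e * P" by simp
    moreover have "(2 * K + e) * P = 2 * (K * P) + e * P" by (simp add: algebra_simps)
    moreover have "K * (2 * P) = 2 * (K * P)" by simp
    ultimately have "G P R (2 * K + e) \<le> (2 * K + e) * (p - 1) + p + q"
      unfolding G_def dm using assms by linarith
    then show ?thesis by linarith
  qed
qed


lemma round_third: "nat (round (real d / 3)) = (d + 1) div 3"
proof -
  define z where "z = (d + 1) div 3"
  have z1: "3 * z \<le> d + 1" "d + 1 \<le> 3 * z + 2" unfolding z_def by auto
  have "round (real d / 3) = int z"
    unfolding round_def
  proof (rule floor_unique)
    show "of_int (int z) \<le> real d / 3 + 1 / 2" using z1 by simp
    show "real d / 3 + 1 / 2 < of_int (int z) + 1" using z1 by simp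
  qed
  then show ?thesis unfolding z_def by simp
qed

lemma Qseed_sd: "Qseed d = sd (d - (d + 1) div 3) ((d + 1) div 3)"
  unfolding Qseed_def sd_def round_third Let_def by simp

theorem theorem1:
  fixes d k :: nat
  assumes "d \<ge> 2" and "k \<ge> 2"
  shows "k_optimal k d (Qseed d)"
proof -
  define R where "R = (d + 1) div 3"
  define P where "P = d - R"
  have f: "R \<le> P" "P \<le> 2 * R + 1" "2 * R \<le> P + 1" "1 \<le> R" "P + R = d"
    using assms(1) unfolding P_def R_def by presburger+
  have Q: "Qseed d = sd P R" unfolding Qseed_sd P_def R_def ..
  have inC: "Qseed d \<in> C1 d" using sd_C1[of P R] f Q by simp
  have up: "critical_length (Qseed d) k \<le> k + G P R k + 1"
    unfolding Q
  proof (rule crit_upper)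
    fix as assume "ok P R as" "length as = k + 1"
    then show "sum_list as \<le> G P R k" using ub[OF f(1,2,4), of as] len_ne[of as k] by auto
  qed
  define K where "K = k div 2"
  define e where "e = k mod 2"
  have ke: "k = 2 * K + e" "1 \<le> K" "e \<le> 1" using assms(2) unfolding K_def e_def by auto
  have "critical_length (Qseed d) k \<le> critical_length Q' k" if Q': "Q' \<in> C1 d" for Q'
  proof -
    obtain p q where pq: "Q' = sd p q" "1 \<le> p" "1 \<le> q" "p + q = d" using C1_form[OF Q'] by blast
    have main: "k + G P R k < critical_length (sd p q) k" if h: "q \<le> p" "1 \<le> q" "p + q = d" for p q
    proof -
      have "G P R k \<le> max (k * (p - 1) + p + q) (p + q + (k div 2) * X p q + (k mod 2) * (p - 1))"
        using arith[OF f(1-4) _ h(1,2) ke(2,3)] h(3) f(5) ke(1) unfolding K_def e_def by simp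
      then show ?thesis using lower_pq[OF h(1,2), of k] by linarith
    qed
    have "k + G P R k < critical_length Q' k"
    proof (cases "q \<le> p")
      case True then show ?thesis using main[of q p] pq by simp
    next
      case False
      have "critical_length Q' k = critical_length (sd q p) k"
        using pq(1) crit_rev[of "sd p q" k] rev_sd[of p q] by simp
      then show ?thesis using main[of p q] pq False by simp
    qed
    then show ?thesis using up by simp
  qed
  then show ?thesis unfolding k_optimal_def using inC by blast
qed

end
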